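(* Every formula $\varphi$ in first normal form is equivalent to a formula $\varphi'$ in second normal form such that $|\varphi'| \leq 3^{\mathrm{gfba}(\varphi)}\cdot|\varphi|$. Moreover, for every $b>0$, if $|\psi|\leq b$ for every limit subformula $\psi$ of $\varphi$, then $|\psi'|\leq b$ for every limit subformula $\psi'$ of $\varphi'$.
   Context: Fix a finite set $Ap$ of atomic propositions. A word is an infinite sequence $w = w[0]w[1]\dots$ of letters of $2^{Ap}$, and $w_i$ denotes the suffix $w[i]w[i+1]\dots$. Formulas are generated by $\varphi ::= \mathbf{true} \mid \mathbf{false} \mid a \mid \neg a \mid \varphi\wedge\varphi \mid \varphi\vee\varphi \mid \mathbf{X}\varphi \mid \varphi\,\mathbf{U}\,\varphi \mid \varphi\,\mathbf{W}\,\varphi \mid \mathbf{GF}\varphi \mid \mathbf{FG}\varphi$ ($a\in Ap$), where $\mathbf{GF}$, $\mathbf{FG}$ are single unary operators (limit operators). Semantics: $w\models a$ iff $a\in w[0]$, $w\models\neg a$ iff $a\notin w[0]$, Boolean constants and connectives as usual; $w\models\mathbf{X}\varphi$ iff $w_1\models\varphi$; $w\models\varphi\mathbf{U}\psi$ iff $\exists k$: $w_k\models\psi$ and $\forall j<k$: $w_j\models\varphi$; $w\models\varphi\mathbf{W}\psi$ iff ($\forall k$: $w_k\models\varphi$) or $w\models\varphi\mathbf{U}\psi$; $w\models\mathbf{GF}\varphi$ iff $w_k\models\varphi$ for infinitely many $k$; $w\models\mathbf{FG}\varphi$ iff $\exists n\,\forall k\geq n$: $w_k\models\varphi$. Two formulas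 are equivalent if satisfied by the same words. The syntax tree $T_\varphi$ has leaves $\mathbf{true},\mathbf{false},a,\neg a$ and one internal node per operator occurrence; $|\varphi|$ is its number of nodes. Formulas with top operator $\mathbf{U},\mathbf{W},\mathbf{X},\mathbf{GF},\mathbf{FG}$ are temporal formulas; those with top operator $\mathbf{GF}$ or $\mathbf{FG}$ are limit formulas, and the corresponding nodes are limit nodes. A node is under another if it is a proper descendant of it. $\mathrm{ubw}(\varphi)$ is the number of $\mathbf{U}$-nodes of $T_\varphi$ that are under some $\mathbf{W}$-node but not under any limit node. $\mathrm{gfba}(\varphi)$ is the number of distinct limit formulas $\psi'$ such that $\psi'$ is a proper subformula of some temporal subformula (proper or not) of $\varphi$. A formula is in first normal form if $\mathrm{ubw}(\varphi)=0$, and in second normal form if $\mathrm{ubw}(\varphi)=0$ and $\mathrm{gfba}(\varphi)=0$. *)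

theory Defs
  imports Main
begin

text \<open>LTL formulas in negation normal form with limit operators GF and FG
  as single unary operators. The atomic propositions form a finite type 'a.\<close>

datatype 'a ltl =
    LTrue
  | LFalse
  | Prop 'a
  | NProp 'a
  | And "'a ltl" "'a ltl"
  | Or "'a ltl" "'a ltl"
  | Next "'a ltl"
  | Until "'a ltl" "'a ltl"
  | WUntil "'a ltl" "'a ltl"
  | GF "'a ltl"
  | FG "'a ltl"

type_synonym 'a word = "nat \<Rightarrow> 'a set"

definition suffix :: "nat \<Rightarrow> 'a word \<Rightarrow> 'a word" where
  "suffix i w = (\<lambda>n. w (n + i))"

primrec sat :: "'a ltl \<Rightarrow> 'a word \<Rightarrow> bool" where
  "sat LTrue w = True"
| "sat LFalse w = False"
| "sat (Prop a) w = (a \<in> w 0)"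
| "sat (NProp a) w = (a \<notin> w 0)"
| "sat (And \<phi> \<psi>) w = (sat \<phi> w \<and> sat \<psi> w)"
| "sat (Or \<phi> \<psi>) w = (sat \<phi> w \<or> sat \<psi> w)"
| "sat (Next \<phi>) w = sat \<phi> (suffix 1 w)"
| "sat (Until \<phi> \<psi>) w = (\<exists>k. sat \<psi> (suffix k w) \<and> (\<forall>j<k. sat \<phi> (suffix j w)))"
| "sat (WUntil \<phi> \<psi>) w = ((\<forall>k. sat \<phi> (suffix k w)) \<or>
       (\<exists>k. sat \<psi> (suffix k w) \<and> (\<forall>j<k. sat \<phi> (suffix j w))))"
| "sat (GF \<phi>) w = (infinite {k. sat \<phi> (suffix k w)})"
| "sat (FG \<phi>) w = (\<exists>n. \<forall>k\<ge>n. sat \<phi> (suffix k w))"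

definition equiv_ltl :: "'a ltl \<Rightarrow> 'a ltl \<Rightarrow> bool" where
  "equiv_ltl \<phi> \<psi> \<longleftrightarrow> (\<forall>w. sat \<phi> w \<longleftrightarrow> sat \<psi> w)"

primrec fsize :: "'a ltl \<Rightarrow> nat" where
  "fsize LTrue = 1"
| "fsize LFalse = 1"
| "fsize (Prop a) = 1"
| "fsize (NProp a) = 1"
| "fsize (And \<phi> \<psi>) = 1 + fsize \<phi> + fsize \<psi>"
| "fsize (Or \<phi> \<psi>) = 1 + fsize \<phi> + fsize \<psi>"
| "fsize (Next \<phi>) = 1 + fsize \<phi>"
| "fsize (Until \<phi> \<psi>) = 1 + fsize \<phi> + fsize \<psi>"
| "fsize (WUntil \<phi> \<psi>) = 1 + fsize \<phi> + fsize \<psi>"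
| "fsize (GF \<phi>) = 1 + fsize \<phi>"
| "fsize (FG \<phi>) = 1 + fsize \<phi>"

primrec subf :: "'a ltl \<Rightarrow> 'a ltl set" where
  "subf LTrue = {LTrue}"
| "subf LFalse = {LFalse}"
| "subf (Prop a) = {Prop a}"
| "subf (NProp a) = {NProp a}"
| "subf (And \<phi> \<psi>) = insert (And \<phi> \<psi>) (subf \<phi> \<union> subf \<psi>)"
| "subf (Or \<phi> \<psi>) = insert (Or \<phi> \<psi>) (subf \<phi> \<union> subf \<psi>)"
| "subf (Next \<phi>) = insert (Next \<phi>) (subf \<phi>)"
| "subf (Until \<phi> \<psi>) = insert (Until \<phi> \<psi>) (subf \<phi> \<union> subf \<psi>)"
| "subf (WUntil \<phi> \<psi>) = insert (WUntil \<phi> \<psi>) (subf \<phi> \<union> subf \<psi>)"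
| "subf (GF \<phi>) = insert (GF \<phi>) (subf \<phi>)"
| "subf (FG \<phi>) = insert (FG \<phi>) (subf \<phi>)"

primrec proper_subf :: "'a ltl \<Rightarrow> 'a ltl set" where
  "proper_subf LTrue = {}"
| "proper_subf LFalse = {}"
| "proper_subf (Prop a) = {}"
| "proper_subf (NProp a) = {}"
| "proper_subf (And \<phi> \<psi>) = subf \<phi> \<union> subf \<psi>"
| "proper_subf (Or \<phi> \<psi>) = subf \<phi> \<union> subf \<psi>"
| "proper_subf (Next \<phi>) = subf \<phi>"
| "proper_subf (Until \<phi> \<psi>) = subf \<phi> \<union> subf \<psi>"
| "proper_subf (WUntil \<phi> \<psi>) = subf \<phi> \<union> subf \<psi>"
| "proper_subf (GF \<phi>) = subf \<phi>"
| "proper_subf (FG \<phi>) = subf \<phi>"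

primrec is_limit :: "'a ltl \<Rightarrow> bool" where
  "is_limit LTrue = False"
| "is_limit LFalse = False"
| "is_limit (Prop a) = False"
| "is_limit (NProp a) = False"
| "is_limit (And \<phi> \<psi>) = False"
| "is_limit (Or \<phi> \<psi>) = False"
| "is_limit (Next \<phi>) = False"
| "is_limit (Until \<phi> \<psi>) = False"
| "is_limit (WUntil \<phi> \<psi>) = False"
| "is_limit (GF \<phi>) = True"
| "is_limit (FG \<phi>) = True"

primrec is_temporal :: "'a ltl \<Rightarrow> bool" where
  "is_temporal LTrue = False"
| "is_temporal LFalse = False"
| "is_temporal (Prop a) = False"
| "is_temporal (NProp a) = False"
| "is_temporal (And \<phi> \<psi>) = False"
| "is_temporal (Or \<phi> \<psi>) = False"
| "is_temporal (Next \<phi>) = True"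
| "is_temporal (Until \<phi> \<psi>) = True"
| "is_temporal (WUntil \<phi> \<psi>) = True"
| "is_temporal (GF \<phi>) = True"
| "is_temporal (FG \<phi>) = True"

text \<open>ubw_aux inW \<phi> counts the U-nodes of the tree of \<phi> that are not under any
  limit node of \<phi> and that are under some W-node, where the flag inW records that
  the root of \<phi> already lies under a W-node (and under no limit node) of the
  enclosing formula.\<close>
primrec ubw_aux :: "bool \<Rightarrow> 'a ltl \<Rightarrow> nat" where
  "ubw_aux b LTrue = 0"
| "ubw_aux b LFalse = 0"
| "ubw_aux b (Prop a) = 0"
| "ubw_aux b (NProp a) = 0"
| "ubw_aux b (And \<phi> \<psi>) = ubw_aux b \<phi> + ubw_aux b \<psi>"
| "ubw_aux b (Or \<phi> \<psi>) = ubw_aux b \<phi> + ubw_aux b \<psi>"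
| "ubw_aux b (Next \<phi>) = ubw_aux b \<phi>"
| "ubw_aux b (Until \<phi> \<psi>) = (if b then 1 else 0) + ubw_aux b \<phi> + ubw_aux b \<psi>"
| "ubw_aux b (WUntil \<phi> \<psi>) = ubw_aux True \<phi> + ubw_aux True \<psi>"
| "ubw_aux b (GF \<phi>) = 0"
| "ubw_aux b (FG \<phi>) = 0"

definition ubw :: "'a ltl \<Rightarrow> nat" where
  "ubw \<phi> = ubw_aux False \<phi>"

definition gfba :: "'a ltl \<Rightarrow> nat" where
  "gfba \<phi> = card {\<psi>'. is_limit \<psi>' \<and>
      (\<exists>\<psi> \<in> subf \<phi>. is_temporal \<psi> \<and> \<psi>' \<in> proper_subf \<psi>)}"

definition first_nf :: "'a ltl \<Rightarrow> bool" where
  "first_nf \<phi> \<longleftrightarrow> ubw \<phi> = 0"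

definition second_nf :: "'a ltl \<Rightarrow> bool" where
  "second_nf \<phi> \<longleftrightarrow> ubw \<phi> = 0 \<and> gfba \<phi> = 0"

definition limit_subf :: "'a ltl \<Rightarrow> 'a ltl set" where
  "limit_subf \<phi> = {\<psi> \<in> subf \<phi>. is_limit \<psi>}"

end

theory Submission
  imports Defs
begin

primrec sb :: "'a ltl \<Rightarrow> 'a ltl \<Rightarrow> 'a ltl \<Rightarrow> 'a ltl" where
  "sb L c LTrue = (if LTrue = L then c else LTrue)"
| "sb L c LFalse = (if LFalse = L then c else LFalse)"
| "sb L c (Prop a) = (if Prop a = L then c else Prop a)"
| "sb L c (NProp a) = (if NProp a = L then c else NProp a)"
| "sb L c (And x y) = (if And x y = L then c else And (sb L c x) (sb L c y))"
| "sb L c (Or x y) = (if Or x y = L then c else Or (sb L c x) (sb L c y))"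
| "sb L c (Next x) = (if Next x = L then c else Next (sb L c x))"
| "sb L c (Until x y) = (if Until x y = L then c else Until (sb L c x) (sb L c y))"
| "sb L c (WUntil x y) = (if WUntil x y = L then c else WUntil (sb L c x) (sb L c y))"
| "sb L c (GF x) = (if GF x = L then c else GF (sb L c x))"
| "sb L c (FG x) = (if FG x = L then c else FG (sb L c x))"

lemma suffix_suffix[simp]: "suffix j (suffix k w) = suffix (j + k) w"
  by (simp add: suffix_def add.assoc)

lemma inf_shift: "infinite {j. P (j + k)} \<longleftrightarrow> infinite {j::nat. P j}"
proof
  assume a: "infinite {j. P (j + k)}"
  show "infinite {j::nat. P j}"
  proof
    assume "finite {j::nat. P j}"
    then obtain m where "\<forall>n\<in>{j. P j}. n \<le> m" unfolding finite_nat_set_iff_bounded_le by blast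
    then have b: "\<And>n. P n \<Longrightarrow> n \<le> m" by blast
    have "\<forall>n\<in>{j. P (j+k)}. n \<le> m"
    proof
      fix n assume "n \<in> {j. P (j+k)}"
      then have "n + k \<le> m" using b by simp
      then show "n \<le> m" by simp
    qed
    then have "finite {j. P (j+k)}" unfolding finite_nat_set_iff_bounded_le by blast
    then show False using a by simp
  qed
next
  assume a: "infinite {j. P j}"
  show "infinite {j::nat. P (j + k)}"
  proof
    assume "finite {j::nat. P (j+k)}"
    then obtain m where "\<forall>n\<in>{j. P (j+k)}. n \<le> m" unfolding finite_nat_set_iff_bounded_le by blast
    then have b: "\<And>n. P (n + k) \<Longrightarrow> n \<le> m" by blast
    have "\<forall>n\<in>{j. P j}. n \<le> m + k"
    proof
      fix n assume "n \<in> {j. P j}"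
      then have "P n" by simp
      show "n \<le> m + k"
      proof (cases "k \<le> n")
        case True
        then have "P ((n - k) + k)" using \<open>P n\<close> by simp
        then show ?thesis using b[of "n-k"] True by linarith
      qed simp
    qed
    then have "finite {j. P j}" unfolding finite_nat_set_iff_bounded_le by blast
    then show False using a by simp
  qed
qed

lemma limit_inv: "is_limit L \<Longrightarrow> sat L (suffix k v) = sat L v"
proof (cases L)
  case (GF x)
  have "sat (GF x) (suffix k v) = infinite {j. sat x (suffix (j+k) v)}" by simp
  also have "\<dots> = infinite {j. sat x (suffix j v)}" by (rule inf_shift)
  also have "\<dots> = sat (GF x) v" by simp
  finally show ?thesis using GF by simp
next
  case (FG x)
  have "(\<exists>n. \<forall>m\<ge>n. sat x (suffix (m + k) v)) = (\<exists>n. \<forall>m\<ge>n. sat x (suffix m v))"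
  proof
    assume "\<exists>n. \<forall>m\<ge>n. sat x (suffix (m + k) v)"
    then obtain n where h: "\<And>m. m \<ge> n \<Longrightarrow> sat x (suffix (m + k) v)" by blast
    have "\<forall>m\<ge>n+k. sat x (suffix m v)"
    proof (intro allI impI)
      fix m assume m: "m \<ge> n + k"
      then have "sat x (suffix ((m - k) + k) v)" using h[of "m-k"] by simp
      then show "sat x (suffix m v)" using m by simp
    qed
    then show "\<exists>n. \<forall>m\<ge>n. sat x (suffix m v)" by blast
  next
    assume "\<exists>n. \<forall>m\<ge>n. sat x (suffix m v)"
    then obtain n where "\<forall>m\<ge>n. sat x (suffix m v)" by blast
    then have "\<forall>m\<ge>n. sat x (suffix (m+k) v)" by simp
    then show "\<exists>n. \<forall>m\<ge>n. sat x (suffix (m + k) v)" by blast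
  qed
  then show ?thesis using FG by simp
qed auto

lemma sat_true: "is_limit L \<Longrightarrow> sat L v \<Longrightarrow> sat (sb L LTrue \<phi>) v = sat \<phi> v"
  by (induction \<phi> arbitrary: v) (auto simp: limit_inv)

lemma sat_false: "is_limit L \<Longrightarrow> \<not> sat L v \<Longrightarrow> sat (sb L LFalse \<phi>) v = sat \<phi> v"
  by (induction \<phi> arbitrary: v) (auto simp: limit_inv)

lemma sat_mono: "sat (sb L LFalse \<phi>) v \<Longrightarrow> sat \<phi> v"
proof (induction \<phi> arbitrary: v)
  case (Until x y)
  show ?case
  proof (cases "Until x y = L")
    case False
    then show ?thesis using Until by auto
  qed (use Until in auto)
next
  case (WUntil x y)
  show ?case
  proof (cases "WUntil x y = L")
    case False
    then have "sat (WUntil (sb L LFalse x) (sb L LFalse y)) v" using WUntil.prems by simp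
    then show ?thesis using WUntil.IH by (simp only: sat.simps) blast
  qed (use WUntil in auto)
next
  case (GF x)
  show ?case
  proof (cases "GF x = L")
    case False
    then have i: "infinite {k. sat (sb L LFalse x) (suffix k v)}" using GF.prems by simp
    have "{k. sat (sb L LFalse x) (suffix k v)} \<subseteq> {k. sat x (suffix k v)}" using GF.IH by blast
    then show ?thesis using i finite_subset by auto
  qed (use GF in auto)
qed (auto split: if_splits)

lemma subf_self: "\<phi> \<in> subf \<phi>"
  by (cases \<phi>) auto

lemma subf_trans: "x \<in> subf y \<Longrightarrow> subf x \<subseteq> subf y"
  by (induction y) auto

lemma subf_size: "x \<in> subf y \<Longrightarrow> fsize x \<le> fsize y"
  by (induction y) auto

lemma proper_subf_size: "x \<in> proper_subf y \<Longrightarrow> fsize x < fsize y"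
  by (cases y) (auto dest: subf_size)

lemma subf_insert: "subf y = insert y (proper_subf y)"
  by (cases y) auto

lemma proper_subf_subf: "x \<in> proper_subf y \<Longrightarrow> x \<in> subf y"
  using subf_insert by blast

lemma finite_subf: "finite (subf \<phi>)"
  by (induction \<phi>) auto

lemma sb_id: "L \<notin> subf \<chi> \<Longrightarrow> sb L c \<chi> = \<chi>"
  by (induction \<chi>) auto

lemma sb_size_le: "fsize c = Suc 0 \<Longrightarrow> fsize (sb L c \<phi>) \<le> fsize \<phi>"
  by (induction \<phi>) auto

lemma sb_size: "fsize c = Suc 0 \<Longrightarrow> L \<in> subf \<phi> \<Longrightarrow> fsize (sb L c \<phi>) + fsize L \<le> fsize \<phi> + 1"
  apply (induction \<phi>) apply auto
  subgoal for x y using sb_size_le[of c L y] by linarith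
  subgoal for x y using sb_size_le[of c L x] by linarith
  subgoal for x y using sb_size_le[of c L y] by linarith
  subgoal for x y using sb_size_le[of c L x] by linarith
  subgoal for x y using sb_size_le[of c L y] by linarith
  subgoal for x y using sb_size_le[of c L x] by linarith
  subgoal for x y using sb_size_le[of c L y] by linarith
  subgoal for x y using sb_size_le[of c L x] by linarith
  done

lemma subf_sb: "\<psi> \<in> subf (sb L c \<phi>) \<Longrightarrow> \<psi> \<in> subf c \<or> (\<exists>\<chi>\<in>subf \<phi>. \<chi> \<noteq> L \<and> \<psi> = sb L c \<chi>)"
  by (induction \<phi>) (auto split: if_splits)

lemma sb_neq_limit: "\<chi> \<noteq> L \<Longrightarrow> is_limit (sb L c \<chi>) = is_limit \<chi>"
  by (cases \<chi>) auto

lemma sb_neq_temporal: "\<chi> \<noteq> L \<Longrightarrow> is_temporal (sb L c \<chi>) = is_temporal \<chi>"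
  by (cases \<chi>) auto

lemma proper_subf_sb: "\<chi> \<noteq> L \<Longrightarrow> \<psi> \<in> proper_subf (sb L c \<chi>) \<Longrightarrow>
   \<psi> \<in> subf c \<or> (\<exists>M\<in>proper_subf \<chi>. M \<noteq> L \<and> \<psi> = sb L c M)"
  by (cases \<chi>) (auto dest: subf_sb)

lemma ubw_sb: "(\<And>b'. ubw_aux b' c = 0) \<Longrightarrow> ubw_aux b (sb L c \<phi>) \<le> ubw_aux b \<phi>"
  by (induction \<phi> arbitrary: b) (simp_all add: add_mono)

definition gs :: "'a ltl \<Rightarrow> 'a ltl set" where
  "gs \<phi> = {\<psi>'. is_limit \<psi>' \<and> (\<exists>\<psi> \<in> subf \<phi>. is_temporal \<psi> \<and> \<psi>' \<in> proper_subf \<psi>)}"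

lemma gfba_gs: "gfba \<phi> = card (gs \<phi>)"
  by (simp add: gfba_def gs_def)

lemma gs_subf: "gs \<phi> \<subseteq> subf \<phi>"
  unfolding gs_def using proper_subf_subf subf_trans by blast

lemma finite_gs: "finite (gs \<phi>)"
  using gs_subf finite_subf finite_subset by blast

lemma fsize_pos: "fsize \<phi> > 0"
  by (cases \<phi>) auto

lemma limit_size: "is_limit L \<Longrightarrow> fsize L \<ge> 2"
  by (cases L) (auto simp: Suc_leI fsize_pos)

lemma gs_size: "L \<in> gs \<phi> \<Longrightarrow> fsize L < fsize \<phi>"
proof -
  assume "L \<in> gs \<phi>"
  then obtain T where "T \<in> subf \<phi>" "L \<in> proper_subf T" unfolding gs_def by blast
  then show ?thesis using proper_subf_size subf_size by fastforce
qed

lemma subf_const: "c \<in> {LTrue, LFalse} \<Longrightarrow> subf c = {c}"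
  by auto

lemma gs_sb:
  assumes L: "L \<in> gs \<phi>" and mx: "\<forall>M\<in>gs \<phi>. fsize M \<le> fsize L" and c: "c \<in> {LTrue, LFalse}"
  shows "gs (sb L c \<phi>) \<subseteq> gs \<phi> - {L}"
proof
  fix x assume "x \<in> gs (sb L c \<phi>)"
  then obtain T where x: "is_limit x" and T: "T \<in> subf (sb L c \<phi>)" "is_temporal T" "x \<in> proper_subf T"
    unfolding gs_def by blast
  have "T \<notin> subf c" using c T(2) by (auto simp del: subf.simps simp add: subf_const)
  moreover have "T \<in> subf c \<or> (\<exists>\<chi>\<in>subf \<phi>. \<chi> \<noteq> L \<and> T = sb L c \<chi>)" by (rule subf_sb[OF T(1)])
  ultimately obtain \<chi> where \<chi>: "\<chi> \<in> subf \<phi>" "\<chi> \<noteq> L" "T = sb L c \<chi>" by blast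
  have t\<chi>: "is_temporal \<chi>" using sb_neq_temporal[OF \<chi>(2), of c] \<chi>(3) T(2) by simp
  have "x \<notin> subf c" using c x by auto
  have "x \<in> proper_subf (sb L c \<chi>)" using T(3) \<chi>(3) by simp
  then have "x \<in> subf c \<or> (\<exists>M\<in>proper_subf \<chi>. M \<noteq> L \<and> x = sb L c M)"
    by (rule proper_subf_sb[OF \<chi>(2)])
  then obtain M where M: "M \<in> proper_subf \<chi>" "M \<noteq> L" "x = sb L c M"
    using \<open>x \<notin> subf c\<close> by blast
  have lM: "is_limit M" using sb_neq_limit[OF M(2), of c] M(3) x by simp
  have Mg: "M \<in> gs \<phi>" unfolding gs_def using lM M(1) \<chi>(1) t\<chi> by auto
  have "L \<notin> subf M"
  proof
    assume "L \<in> subf M"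
    then have "L \<in> proper_subf M" using M(2) subf_insert[of M] by simp
    then have "fsize L < fsize M" by (rule proper_subf_size)
    moreover have "fsize M \<le> fsize L" using mx Mg by blast
    ultimately show False by linarith
  qed
  then have "x = M" using M(3) sb_id[of L M c] by simp
  then show "x \<in> gs \<phi> - {L}" using Mg M(2) by blast
qed

lemma gs_L: assumes "L \<in> gs \<phi>" shows "gs L \<subseteq> gs \<phi> - {L}"
proof
  fix x assume x: "x \<in> gs L"
  have Ls: "L \<in> subf \<phi>" using assms gs_subf by blast
  have "x \<in> gs \<phi>" using x subf_trans[OF Ls] unfolding gs_def by blast
  moreover have "fsize x < fsize L" by (rule gs_size[OF x])
  ultimately show "x \<in> gs \<phi> - {L}" by blast
qed

lemma gs_OrAnd: "gs (Or (And L a) b) \<subseteq> gs L \<union> gs a \<union> gs b"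
  unfolding gs_def by auto

lemma limit_subf_sb:
  assumes "x \<in> subf (sb L c \<phi>)" "is_limit x" "c \<in> {LTrue, LFalse}"
  shows "\<exists>\<chi>\<in>subf \<phi>. is_limit \<chi> \<and> fsize x \<le> fsize \<chi>"
proof -
  have "x \<notin> subf c" using assms by auto
  moreover have "x \<in> subf c \<or> (\<exists>\<chi>\<in>subf \<phi>. \<chi> \<noteq> L \<and> x = sb L c \<chi>)" by (rule subf_sb[OF assms(1)])
  ultimately obtain \<chi> where \<chi>: "\<chi> \<in> subf \<phi>" "\<chi> \<noteq> L" "x = sb L c \<chi>" by blast
  have "is_limit \<chi>" using sb_neq_limit[OF \<chi>(2), of c] \<chi>(3) assms(2) by simp
  moreover have "fsize x \<le> fsize \<chi>" using \<chi>(3) sb_size_le[of c L \<chi>] assms(3) by auto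
  ultimately show ?thesis using \<chi>(1) by blast
qed

lemma step:
  fixes \<phi> :: "'a ltl"
  assumes nf: "ubw \<phi> = 0" and L: "L \<in> gs \<phi>" and mx: "\<forall>M\<in>gs \<phi>. fsize M \<le> fsize L"
  defines "\<phi>1 \<equiv> Or (And L (sb L LTrue \<phi>)) (sb L LFalse \<phi>)"
  shows "equiv_ltl \<phi> \<phi>1" "ubw \<phi>1 = 0" "gfba \<phi>1 < gfba \<phi>" "fsize \<phi>1 \<le> 3 * fsize \<phi>"
    "\<And>b. (\<forall>\<psi> \<in> limit_subf \<phi>. fsize \<psi> \<le> b) \<Longrightarrow> (\<forall>\<psi> \<in> limit_subf \<phi>1. fsize \<psi> \<le> b)"
proof -
  have lL: "is_limit L" using L unfolding gs_def by blast
  have Ls: "L \<in> subf \<phi>" using L gs_subf by blast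
  show "equiv_ltl \<phi> \<phi>1"
    unfolding equiv_ltl_def \<phi>1_def
  proof
    fix w
    show "sat \<phi> w = sat (Or (And L (sb L LTrue \<phi>)) (sb L LFalse \<phi>)) w"
      using sat_true[OF lL, of w \<phi>] sat_false[OF lL, of w \<phi>] sat_mono[of L \<phi> w] by auto
  qed
  have u0: "ubw_aux False L = 0" using lL by (cases L) auto
  have u1: "ubw_aux False (sb L LTrue \<phi>) = 0" using ubw_sb[of LTrue False L \<phi>] nf unfolding ubw_def by simp
  have u2: "ubw_aux False (sb L LFalse \<phi>) = 0" using ubw_sb[of LFalse False L \<phi>] nf unfolding ubw_def by simp
  show "ubw \<phi>1 = 0" unfolding ubw_def \<phi>1_def using u0 u1 u2 by simp
  have "gs \<phi>1 \<subseteq> gs \<phi> - {L}"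
    using gs_OrAnd[of L "sb L LTrue \<phi>" "sb L LFalse \<phi>"] gs_L[OF L] gs_sb[OF L mx, of LTrue] gs_sb[OF L mx, of LFalse]
    unfolding \<phi>1_def by auto
  then have "card (gs \<phi>1) \<le> card (gs \<phi> - {L})" using finite_gs card_mono by (metis finite_Diff)
  also have "\<dots> < card (gs \<phi>)" using L finite_gs[of \<phi>] by (meson card_Diff1_less)
  finally show "gfba \<phi>1 < gfba \<phi>" unfolding gfba_gs .
  have s1: "fsize (sb L LTrue \<phi>) + fsize L \<le> fsize \<phi> + 1" using sb_size[of LTrue L \<phi>] Ls by simp
  have s2: "fsize (sb L LFalse \<phi>) + fsize L \<le> fsize \<phi> + 1" using sb_size[of LFalse L \<phi>] Ls by simp
  have "fsize L \<ge> 2" using limit_size lL by blast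
  moreover have "fsize L < fsize \<phi>" using gs_size L by blast
  ultimately show "fsize \<phi>1 \<le> 3 * fsize \<phi>" unfolding \<phi>1_def using s1 s2 by simp
  fix b assume B: "\<forall>\<psi> \<in> limit_subf \<phi>. fsize \<psi> \<le> b"
  show "\<forall>\<psi> \<in> limit_subf \<phi>1. fsize \<psi> \<le> b"
  proof
    fix x assume "x \<in> limit_subf \<phi>1"
    then have x: "x \<in> subf \<phi>1" "is_limit x" unfolding limit_subf_def by auto
    then have "x \<in> subf L \<or> x \<in> subf (sb L LTrue \<phi>) \<or> x \<in> subf (sb L LFalse \<phi>)"
      unfolding \<phi>1_def by auto
    then obtain \<chi> where "\<chi> \<in> subf \<phi>" "is_limit \<chi>" "fsize x \<le> fsize \<chi>"
      using subf_trans[OF Ls] x(2) limit_subf_sb[OF _ x(2), of L LTrue \<phi>] limit_subf_sb[OF _ x(2), of L LFalse \<phi>]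
      by auto
    then show "fsize x \<le> b" using B unfolding limit_subf_def by fastforce
  qed
qed

theorem proposition2:
  fixes \<phi> :: "'a::finite ltl"
  assumes "first_nf \<phi>"
  shows "\<exists>\<phi>'. equiv_ltl \<phi> \<phi>' \<and> second_nf \<phi>' \<and>
           fsize \<phi>' \<le> 3 ^ gfba \<phi> * fsize \<phi> \<and>
           (\<forall>b::nat. b > 0 \<longrightarrow> (\<forall>\<psi> \<in> limit_subf \<phi>. fsize \<psi> \<le> b) \<longrightarrow>
                (\<forall>\<psi>' \<in> limit_subf \<phi>'. fsize \<psi>' \<le> b))"
  using assms
proof (induction "gfba \<phi>" arbitrary: \<phi> rule: less_induct)
  case less
  have nf: "ubw \<phi> = 0" using less.prems unfolding first_nf_def .
  show ?case
  proof (cases "gfba \<phi> = 0")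
    case True
    then show ?thesis using nf unfolding second_nf_def equiv_ltl_def by auto
  next
    case False
    then have ne: "gs \<phi> \<noteq> {}" unfolding gfba_gs by auto
    have "Max (fsize ` gs \<phi>) \<in> fsize ` gs \<phi>" using ne finite_gs[of \<phi>] by (intro Max_in) auto
    then obtain L where L: "L \<in> gs \<phi>" "fsize L = Max (fsize ` gs \<phi>)" by auto
    have mx: "\<forall>M\<in>gs \<phi>. fsize M \<le> fsize L"
    proof
      fix M assume "M \<in> gs \<phi>"
      then show "fsize M \<le> fsize L" unfolding L(2) using finite_gs[of \<phi>] by (intro Max_ge) auto
    qed
    define \<phi>1 where "\<phi>1 = Or (And L (sb L LTrue \<phi>)) (sb L LFalse \<phi>)"
    note st = step[OF nf L(1) mx, folded \<phi>1_def]
    have "first_nf \<phi>1" using st(2) unfolding first_nf_def .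
    then obtain \<phi>2 where e2: "equiv_ltl \<phi>1 \<phi>2" and n2: "second_nf \<phi>2"
       and s2: "fsize \<phi>2 \<le> 3 ^ gfba \<phi>1 * fsize \<phi>1"
       and l2: "\<forall>b::nat. b > 0 \<longrightarrow> (\<forall>\<psi> \<in> limit_subf \<phi>1. fsize \<psi> \<le> b) \<longrightarrow>
                (\<forall>\<psi>' \<in> limit_subf \<phi>2. fsize \<psi>' \<le> b)"
      using less.hyps[OF st(3)] by blast
    have "equiv_ltl \<phi> \<phi>2" using st(1) e2 unfolding equiv_ltl_def by simp
    moreover have "fsize \<phi>2 \<le> 3 ^ gfba \<phi> * fsize \<phi>"
    proof -
      have "fsize \<phi>2 \<le> 3 ^ gfba \<phi>1 * (3 * fsize \<phi>)" by (rule order_trans[OF s2 mult_le_mono2[OF st(4)]])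
      also have "\<dots> = 3 ^ (gfba \<phi>1 + 1) * fsize \<phi>" by simp
      also have "\<dots> \<le> 3 ^ gfba \<phi> * fsize \<phi>"
        using st(3) by (intro mult_le_mono1 power_increasing) auto
      finally show ?thesis .
    qed
    moreover have "\<forall>b::nat. b > 0 \<longrightarrow> (\<forall>\<psi> \<in> limit_subf \<phi>. fsize \<psi> \<le> b) \<longrightarrow>
                (\<forall>\<psi>' \<in> limit_subf \<phi>2. fsize \<psi>' \<le> b)"
    proof (intro allI impI)
      fix b :: nat assume "b > 0" "\<forall>\<psi> \<in> limit_subf \<phi>. fsize \<psi> \<le> b"
      then show "\<forall>\<psi>' \<in> limit_subf \<phi>2. fsize \<psi>' \<le> b" using l2 st(5)[of b] by simp
    qed
    ultimately show ?thesis using n2 by blast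
  qed
qed

end
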